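(* For $v\in S_n$ and $x\in\mathfrak{ut}_n$, $$\chi^v(x)=\prod_{\substack{1\le i<j\le n\\ j-i\le\iota_i(v)}}\mathbf 1(x_{ij})\prod_{\substack{1\le i<j\le n\\ j-i=\iota_i(v)+1}}(\mathrm{reg}-\mathbf 1)(x_{ij})\prod_{\substack{1\le i<j\le n\\ j-i>\iota_i(v)+1}}\mathrm{reg}(x_{ij}),$$ where for $t\in\mathbb{F}_q$, $\mathbf 1(t)=1$ and $\mathrm{reg}(t)=q$ if $t=0$, $\mathrm{reg}(t)=0$ if $t\ne0$.
   Context: Let $q$ be a prime power and $\mathfrak{ut}_n$ the additive group of strictly upper triangular $n\times n$ matrices over $\mathbb{F}_q$. For $w\in S_n$ (one-line notation), $\iota_k(w)=\#\{i<w^{-1}(k):w(i)>k\}$ and $\mathfrak{ut}_w=\{x\in\mathfrak{ut}_n:x_{ij}\ne0\Rightarrow0<j-i\le\iota_i(w)\}$; these subgroups form a lattice closed under intersection and sum. In the associated normal lattice supercharacter theory, the supercharacter $\chi^w$ is $\sum_\psi\psi(1)\psi$, summed over irreducible characters $\psi$ of $\mathfrak{ut}_n$ such that $\mathfrak{ut}_w$ is the largest member of the lattice contained in $\ker\psi$. The functions $\mathbf 1$ and $\mathrm{reg}$ are the trivial and regular characters of the additive group $\mathbb{F}_q^+$. *)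

theory Defs
  imports Complex_Main "HOL-Combinatorics.Permutations"
begin

text \<open>Matrices are functions nat => nat => 'a (1-based indices).
  ut n = strictly upper triangular n x n matrices over the finite field 'a.\<close>

type_synonym 'a mat = "nat \<Rightarrow> nat \<Rightarrow> 'a"

definition ut :: "nat \<Rightarrow> ('a::{finite,field}) mat set" where
  "ut n = {x. \<forall>i j. x i j \<noteq> 0 \<longrightarrow> 1 \<le> i \<and> i < j \<and> j \<le> n}"

definition iota :: "nat \<Rightarrow> (nat \<Rightarrow> nat) \<Rightarrow> nat \<Rightarrow> nat" where
  "iota n w k = card {i \<in> {1..n}. i < inv_into {1..n} w k \<and> w i > k}"

definition ut_perm :: "nat \<Rightarrow> (nat \<Rightarrow> nat) \<Rightarrow> ('a::{finite,field}) mat set" where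
  "ut_perm n w = {x \<in> ut n. \<forall>i j. x i j \<noteq> 0 \<longrightarrow> 0 < j - i \<and> j - i \<le> iota n w i}"

text \<open>Irreducible characters of the finite abelian group ut n: homomorphisms
  into the multiplicative group of complex numbers (extended by 0 off the group).\<close>
definition irr_chars :: "nat \<Rightarrow> (('a::{finite,field}) mat \<Rightarrow> complex) set" where
  "irr_chars n = {\<psi>. \<psi> (\<lambda>i j. 0) = 1 \<and>
      (\<forall>x\<in>ut n. \<forall>y\<in>ut n. \<psi> (\<lambda>i j. x i j + y i j) = \<psi> x * \<psi> y) \<and>
      (\<forall>x. x \<notin> ut n \<longrightarrow> \<psi> x = 0)}"

definition ker_char :: "nat \<Rightarrow> (('a::{finite,field}) mat \<Rightarrow> complex) \<Rightarrow> 'a mat set" where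
  "ker_char n \<psi> = {x \<in> ut n. \<psi> x = \<psi> (\<lambda>i j. 0)}"

definition largest_in_ker ::
    "nat \<Rightarrow> (('a::{finite,field}) mat \<Rightarrow> complex) \<Rightarrow> (nat \<Rightarrow> nat) \<Rightarrow> bool" where
  "largest_in_ker n \<psi> w \<longleftrightarrow>
     (ut_perm n w :: 'a mat set) \<subseteq> ker_char n \<psi> \<and>
     (\<forall>u. u permutes {1..n} \<longrightarrow> (ut_perm n u :: 'a mat set) \<subseteq> ker_char n \<psi>
            \<longrightarrow> (ut_perm n u :: 'a mat set) \<subseteq> ut_perm n w)"

text \<open>Supercharacter chi^w = sum of psi(1) psi over psi with largest lattice member in ker psi equal to ut_w.
  The identity element of ut n is the zero matrix.\<close>
definition superchar :: "nat \<Rightarrow> (nat \<Rightarrow> nat) \<Rightarrow> ('a::{finite,field}) mat \<Rightarrow> complex" where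
  "superchar n w x =
     (\<Sum>\<psi> \<in> {\<psi> \<in> irr_chars n. \<exists>u. u permutes {1..n} \<and> largest_in_ker n \<psi> u \<and>
                 (ut_perm n u :: 'a mat set) = ut_perm n w}. \<psi> (\<lambda>i j. 0) * \<psi> x)"

definition triv :: "'a::{finite,field} \<Rightarrow> complex" where
  "triv t = 1"

definition reg :: "'a::{finite,field} \<Rightarrow> complex" where
  "reg t = (if t = 0 then of_nat (card (UNIV :: 'a set)) else 0)"

end

theory Submission
  imports Defs "HOL-Number_Theory.Number_Theory"
begin

definition achars :: "('a::{finite,field} \<Rightarrow> complex) set" where
  "achars = {\<theta>. \<theta> 0 = 1 \<and> (\<forall>a b. \<theta> (a+b) = \<theta> a * \<theta> b)}"

lemma CHAR_pos': "CHAR('a::{finite,field}) > 0"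
  by (rule finite_imp_CHAR_pos) simp

lemma CHAR_prime': "prime CHAR('a::{finite,field})"
  by (rule prime_CHAR_semidom) (rule CHAR_pos')

lemma ofnat_inverse:
  assumes "(of_nat k :: 'a::{finite,field}) \<noteq> 0"
  shows "\<exists>k'. (of_nat k' :: 'a) * of_nat k = 1"
proof -
  have "\<not> CHAR('a) dvd k" using assms of_nat_eq_0_iff_char_dvd by blast
  hence "coprime CHAR('a) k" using CHAR_prime' prime_imp_coprime by blast
  hence "coprime k CHAR('a)" by (simp add: coprime_commute)
  then obtain k' where "[k * k' = Suc 0] (mod CHAR('a))" using cong_solve_coprime_nat by blast
  hence "(of_nat (k*k') :: 'a) = of_nat (Suc 0)" using of_nat_eq_iff_cong_CHAR by blast
  thus ?thesis by (metis mult.commute of_nat_1 One_nat_def of_nat_mult)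
qed

lemma neg_ofnat: "- (of_nat b :: 'a::{finite,field}) = of_nat ((CHAR('a) - 1) * b)"
proof -
  have p: "CHAR('a) > 0" by (rule CHAR_pos')
  have "(CHAR('a) - 1) * b + b = CHAR('a) * b" using p
    by (metis Suc_diff_1 add.commute mult_Suc)
  hence "(of_nat ((CHAR('a) - 1) * b) :: 'a) + of_nat b = of_nat (CHAR('a) * b)"
    by (metis of_nat_add)
  also have "\<dots> = 0" by simp
  finally show ?thesis by (metis add.commute neg_eq_iff_add_eq_0)
qed

definition subsp :: "'a::{finite,field} set \<Rightarrow> bool" where
  "subsp M \<longleftrightarrow> 0 \<in> M \<and> (\<forall>a\<in>M. \<forall>b\<in>M. a + b \<in> M) \<and> (\<forall>a\<in>M. \<forall>k. of_nat k * a \<in> M)"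

lemma subsp_neg: "subsp M \<Longrightarrow> a \<in> M \<Longrightarrow> - a \<in> M"
proof -
  assume "subsp M" "a \<in> M"
  have "- a = - (of_nat 1) * a" by simp
  also have "\<dots> = of_nat ((CHAR('a) - 1) * 1) * a" by (subst neg_ofnat) simp
  finally show ?thesis using \<open>subsp M\<close> \<open>a \<in> M\<close> unfolding subsp_def by metis
qed

lemma subsp_diff: "subsp M \<Longrightarrow> a \<in> M \<Longrightarrow> b \<in> M \<Longrightarrow> a - b \<in> M"
  using subsp_neg[of M b] unfolding subsp_def by (metis diff_conv_add_uminus)

lemma omega_facts:
  fixes p :: nat
  assumes "p \<ge> 2"
  shows "cis (2*pi/p) ^ p = 1" and "cis (2*pi/p) \<noteq> 1"
proof -
  show "cis (2*pi/p) ^ p = 1" using assms by (simp add: DeMoivre)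
  show "cis (2*pi/p) \<noteq> 1"
  proof
    assume "cis (2*pi/p) = 1"
    hence "cos (2*pi/p) = 1" by (metis Re_complex_of_real complex_of_real_def cis.sel(1) one_complex.sel(1))
    then obtain n :: int where n: "2*pi/p = of_int n * 2 * pi" using cos_one_2pi_int[of "2*pi/p"] by blast
    hence "2*pi*(1/real p - of_int n) = 0" by (simp add: field_simps)
    hence "1 / real p = n" using pi_gt_zero by simp
    moreover have "0 < 1 / real p" "1 / real p < 1" using assms by auto
    ultimately have "(0::real) < of_int n" "of_int n < (1::real)" by auto
    hence "0 < n" "n < 1" by simp_all
    thus False by simp
  qed
qed

lemma pow_mod_red:
  fixes w :: complex
  assumes "w ^ p = 1"
  shows "w ^ a = w ^ (a mod p)"
proof -
  have "w ^ a = w ^ (p * (a div p) + a mod p)" by simp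
  also have "\<dots> = (w ^ p) ^ (a div p) * w ^ (a mod p)" by (simp only: power_add power_mult)
  also have "\<dots> = w ^ (a mod p)" using assms by simp
  finally show ?thesis .
qed

lemma pow_mod_eq:
  fixes w :: complex
  assumes "w ^ p = 1" "a mod p = b mod p"
  shows "w ^ a = w ^ b"
  using pow_mod_red[OF assms(1), of a] pow_mod_red[OF assms(1), of b] assms(2) by simp

lemma exists_nontriv: "\<exists>\<theta>\<in>(achars::('a::{finite,field} \<Rightarrow> complex) set). \<theta> 1 \<noteq> 1"
proof -
  let ?p = "CHAR('a)"
  have p2: "?p \<ge> 2" using CHAR_prime' prime_ge_2_nat by blast
  let ?F = "{M::'a set. subsp M \<and> 1 \<notin> M}"
  have F0: "{0} \<in> ?F" by (auto simp: subsp_def)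
  have "finite ?F" by (rule finite_subset[of _ "Pow UNIV"]) auto
  then obtain M where M: "M \<in> ?F" and max: "\<forall>N\<in>?F. M \<subseteq> N \<longrightarrow> M = N"
    using finite_has_maximal[of ?F] F0 by blast
  have sM: "subsp M" and nM: "1 \<notin> M" using M by auto
  have ofnat_in: "(of_nat k :: 'a) = 0" if "of_nat k \<in> M" for k
  proof (rule ccontr)
    assume "of_nat k \<noteq> (0::'a)"
    then obtain k' where "of_nat k' * of_nat k = (1::'a)" using ofnat_inverse by blast
    then have "1 \<in> M" using sM that unfolding subsp_def by metis
    thus False using nM by simp
  qed
  have ex: "\<exists>k. y - of_nat k \<in> M" for y
  proof (cases "y \<in> M")
    case True then show ?thesis by (intro exI[of _ 0]) simp
  next
    case False
    define N where "N = {m + of_nat k * y | m k. m \<in> M}"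
    have sN: "subsp N" unfolding subsp_def
    proof (intro conjI ballI allI)
      show "0 \<in> N" unfolding N_def using sM by (auto simp: subsp_def intro!: exI[of _ 0])
    next
      fix a b assume "a \<in> N" "b \<in> N"
      then obtain m1 k1 m2 k2 where "a = m1 + of_nat k1 * y" "m1 \<in> M" "b = m2 + of_nat k2 * y" "m2 \<in> M"
        unfolding N_def by blast
      hence "a + b = (m1 + m2) + of_nat (k1 + k2) * y" "m1 + m2 \<in> M"
        using sM by (auto simp: subsp_def algebra_simps)
      thus "a + b \<in> N" unfolding N_def by blast
    next
      fix a j assume "a \<in> N"
      then obtain m1 k1 where "a = m1 + of_nat k1 * y" "m1 \<in> M"
        unfolding N_def by blast
      hence "of_nat j * a = of_nat j * m1 + of_nat (j * k1) * y" "of_nat j * m1 \<in> M"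
        using sM by (auto simp: subsp_def algebra_simps)
      thus "of_nat j * a \<in> N" unfolding N_def by blast
    qed
    have "M \<subseteq> N" unfolding N_def by (force intro: exI[of _ 0])
    moreover have "y \<in> N"
    proof -
      have "y = 0 + of_nat 1 * y" "0 \<in> M" using sM by (auto simp: subsp_def)
      thus ?thesis unfolding N_def by blast
    qed
    ultimately have "1 \<in> N" using max sN False by blast
    then obtain m k where mk: "1 = m + of_nat k * y" "m \<in> M" unfolding N_def by blast
    have "(of_nat k :: 'a) \<noteq> 0" using mk nM by auto
    then obtain k' where k': "of_nat k' * of_nat k = (1::'a)" using ofnat_inverse by blast
    have "of_nat k' * (1::'a) = of_nat k' * m + (of_nat k' * of_nat k) * y"
      by (subst mk(1)) (simp add: algebra_simps)
    hence "y - of_nat k' = - (of_nat k' * m)" using k' by (simp add: algebra_simps)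
    moreover have "- (of_nat k' * m) \<in> M" using sM mk(2) subsp_neg unfolding subsp_def by blast
    ultimately show ?thesis by metis
  qed
  have uniq: "a mod ?p = b mod ?p" if "y - of_nat a \<in> M" "y - of_nat b \<in> M" for y a b
  proof -
    have "(y - of_nat b) - (y - of_nat a) \<in> M" using that sM subsp_diff by blast
    moreover have "(y - of_nat b) - (y - of_nat a) = (of_nat a :: 'a) + - of_nat b" by simp
    moreover have "(of_nat a :: 'a) + - of_nat b = of_nat (a + (?p - 1) * b)"
      by (simp add: neg_ofnat)
    ultimately have "(of_nat a :: 'a) + - of_nat b = 0" using ofnat_in by metis
    hence "(of_nat a :: 'a) = of_nat b" by (metis add.commute neg_eq_iff_add_eq_0 minus_minus)
    thus ?thesis using of_nat_eq_iff_cong_CHAR unfolding cong_def by blast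
  qed
  define c where "c y = (SOME k. y - of_nat k \<in> M)" for y
  have c: "y - of_nat (c y) \<in> M" for y unfolding c_def using ex someI_ex by metis
  define \<omega> where "\<omega> = cis (2*pi/?p)"
  have wp: "\<omega> ^ ?p = 1" and w1: "\<omega> \<noteq> 1" using omega_facts[OF p2] unfolding \<omega>_def by auto
  define \<theta> where "\<theta> y = \<omega> ^ c y" for y
  have "\<theta> 0 = 1"
  proof -
    have "(0::'a) - of_nat 0 \<in> M" using sM by (simp add: subsp_def)
    hence "c 0 mod ?p = 0 mod ?p" by (rule uniq[OF c[of 0]])
    thus ?thesis unfolding \<theta>_def using pow_mod_eq[OF wp, of "c 0" 0] by simp
  qed
  moreover have "\<theta> (a + b) = \<theta> a * \<theta> b" for a b
  proof -
    have "(a + b) - of_nat (c a + c b) = (a - of_nat (c a)) + (b - of_nat (c b))" by simp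
    hence "(a + b) - of_nat (c a + c b) \<in> M" using c sM unfolding subsp_def by metis
    hence "c (a+b) mod ?p = (c a + c b) mod ?p" by (rule uniq[OF c[of "a+b"]])
    hence "\<omega> ^ c (a+b) = \<omega> ^ (c a + c b)" by (rule pow_mod_eq[OF wp])
    thus ?thesis unfolding \<theta>_def by (simp add: power_add)
  qed
  ultimately have "\<theta> \<in> achars" unfolding achars_def by blast
  moreover have "\<theta> 1 \<noteq> 1"
  proof -
    have "(1::'a) - of_nat 1 \<in> M" using sM by (simp add: subsp_def)
    hence "c 1 mod ?p = 1 mod ?p" by (rule uniq[OF c[of 1]])
    hence "\<omega> ^ c 1 = \<omega> ^ 1" by (rule pow_mod_eq[OF wp])
    hence "\<theta> 1 = \<omega>" unfolding \<theta>_def by simp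
    thus ?thesis using w1 by simp
  qed
  ultimately show ?thesis by (intro bexI[of _ \<theta>])
qed

lemma achars_sep:
  assumes "(t::'a::{finite,field}) \<noteq> 0"
  shows "\<exists>\<theta>\<in>achars. \<theta> t \<noteq> 1"
proof -
  obtain \<theta>1 where th1: "\<theta>1 \<in> (achars :: ('a \<Rightarrow> complex) set)" "\<theta>1 1 \<noteq> 1"
    using exists_nontriv by blast
  define \<theta> where "\<theta> y = \<theta>1 (y / t)" for y
  have "\<theta> \<in> achars" using th1(1) unfolding achars_def \<theta>_def by (simp add: add_divide_distrib)
  moreover have "\<theta> t \<noteq> 1" using th1(2) assms unfolding \<theta>_def by simp
  ultimately show ?thesis by blast
qed

lemma achars_pow:
  assumes "\<theta> \<in> achars"
  shows "\<theta> (of_nat k * y) = \<theta> y ^ k"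
proof (induction k)
  case 0 then show ?case using assms by (simp add: achars_def)
next
  case (Suc k)
  have "\<theta> (of_nat (Suc k) * y) = \<theta> (y + of_nat k * y)" by (simp add: algebra_simps)
  also have "\<dots> = \<theta> y * \<theta> (of_nat k * y)" using assms by (simp add: achars_def)
  finally show ?case using Suc by simp
qed

lemma finite_achars: "finite (achars :: ('a::{finite,field} \<Rightarrow> complex) set)"
proof -
  let ?p = "CHAR('a)"
  have "(achars :: ('a \<Rightarrow> complex) set) \<subseteq> Pi\<^sub>E UNIV (\<lambda>_. {z::complex. z ^ ?p = 1})"
  proof
    fix \<theta> :: "'a \<Rightarrow> complex" assume th: "\<theta> \<in> achars"
    have "\<theta> y ^ ?p = 1" for y
      using achars_pow[OF th, of ?p y] th by (simp add: achars_def)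
    thus "\<theta> \<in> Pi\<^sub>E UNIV (\<lambda>_. {z::complex. z ^ ?p = 1})" by (simp add: PiE_UNIV_domain)
  qed
  moreover have "finite (Pi\<^sub>E (UNIV::'a set) (\<lambda>_. {z::complex. z ^ ?p = 1}))"
    using CHAR_pos'[where 'a='a] by (intro finite_PiE finite_roots_unity) auto
  ultimately show ?thesis by (rule finite_subset)
qed

lemma one_achars: "(\<lambda>_. 1) \<in> achars"
  by (simp add: achars_def)

lemma achars_nonzero: "\<theta> \<in> achars \<Longrightarrow> \<theta> y * \<theta> (- y) = 1"
  by (metis (mono_tags, lifting) achars_def mem_Collect_eq right_minus)

lemma sum_over_t:
  assumes "\<theta> \<in> (achars :: ('a::{finite,field} \<Rightarrow> complex) set)" "\<theta> \<noteq> (\<lambda>_. 1)"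
  shows "(\<Sum>t\<in>UNIV. \<theta> t) = 0"
proof -
  obtain s where s: "\<theta> s \<noteq> 1" using assms(2) by blast
  have "(\<Sum>t\<in>UNIV. \<theta> t) = (\<Sum>t\<in>UNIV. \<theta> (s + t))"
    by (rule sum.reindex_bij_witness[where i="\<lambda>t. s + t" and j="\<lambda>t. t - s"]) auto
  also have "\<dots> = \<theta> s * (\<Sum>t\<in>UNIV. \<theta> t)"
    using assms(1) by (simp add: achars_def sum_distrib_left)
  finally have "(1 - \<theta> s) * (\<Sum>t\<in>UNIV. \<theta> t) = 0" by (simp add: algebra_simps)
  thus ?thesis using s by simp
qed

lemma sum_over_chars_nz:
  assumes "(t::'a::{finite,field}) \<noteq> 0"
  shows "(\<Sum>\<theta>\<in>achars. \<theta> t) = 0"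
proof -
  obtain \<phi> where ph: "\<phi> \<in> achars" "\<phi> t \<noteq> 1" using achars_sep[OF assms] by blast
  have mul: "(\<lambda>y. \<theta> y * \<phi>' y) \<in> achars" if "\<theta> \<in> achars" "\<phi>' \<in> achars" for \<theta> \<phi>'
    using that by (simp add: achars_def algebra_simps)
  have phm: "(\<lambda>y. \<phi> (- y)) \<in> achars" unfolding achars_def mem_Collect_eq
  proof (intro conjI allI)
    show "\<phi> (- 0) = 1" using ph(1) by (simp add: achars_def)
    fix a b show "\<phi> (-(a+b)) = \<phi> (-a) * \<phi> (-b)"
    proof -
      have "\<phi> (-a + -b) = \<phi> (-a) * \<phi> (-b)" using ph(1) unfolding achars_def by blast
      then show ?thesis by simp
    qed
  qed
  have "(\<Sum>\<theta>\<in>achars. \<theta> t) = (\<Sum>\<theta>\<in>achars. \<theta> t * \<phi> t)"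
  proof (rule sum.reindex_bij_witness[where j="\<lambda>\<theta> y. \<theta> y * \<phi> (- y)" and i="\<lambda>\<theta> y. \<theta> y * \<phi> y"])
    fix \<theta> :: "'a \<Rightarrow> complex" assume "\<theta> \<in> achars"
    show "(\<lambda>y. \<theta> y * \<phi> (- y) * \<phi> y) = \<theta>"
    proof (rule ext)
      fix y
      have "\<theta> y * \<phi> (- y) * \<phi> y = \<theta> y * (\<phi> y * \<phi> (- y))" by (simp add: ac_simps)
      thus "\<theta> y * \<phi> (- y) * \<phi> y = \<theta> y" using achars_nonzero[OF ph(1)] by simp
    qed
    show "(\<lambda>y. \<theta> y * \<phi> y * \<phi> (- y)) = \<theta>"
    proof (rule ext)
      fix y
      have "\<theta> y * \<phi> y * \<phi> (- y) = \<theta> y * (\<phi> y * \<phi> (- y))" by (simp add: ac_simps)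
      thus "\<theta> y * \<phi> y * \<phi> (- y) = \<theta> y" using achars_nonzero[OF ph(1)] by simp
    qed
    show "(\<lambda>y. \<theta> y * \<phi> y) \<in> achars" using mul \<open>\<theta> \<in> achars\<close> ph(1) by blast
    show "(\<lambda>y. \<theta> y * \<phi> (- y)) \<in> achars" using mul[OF \<open>\<theta> \<in> achars\<close> phm] by simp
    have "\<theta> t * \<phi> (- t) * \<phi> t = \<theta> t * (\<phi> t * \<phi> (- t))" by (simp add: ac_simps)
    thus "\<theta> t * \<phi> (- t) * \<phi> t = \<theta> t" using achars_nonzero[OF ph(1)] by simp
  qed
  also have "\<dots> = \<phi> t * (\<Sum>\<theta>\<in>achars. \<theta> t)" by (simp add: sum_distrib_left mult.commute)
  finally have "(1 - \<phi> t) * (\<Sum>\<theta>\<in>achars. \<theta> t) = 0" by (simp add: algebra_simps)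
  thus ?thesis using ph(2) by simp
qed

lemma achars_0: "\<theta> \<in> achars \<Longrightarrow> \<theta> 0 = 1"
  by (simp add: achars_def)

lemma sum_at0: "(\<Sum>\<theta>\<in>(achars :: ('a::{finite,field} \<Rightarrow> complex) set). \<theta> 0) = of_nat (card (achars :: ('a \<Rightarrow> complex) set))"
proof -
  have "(\<Sum>\<theta>\<in>(achars :: ('a \<Rightarrow> complex) set). \<theta> 0) = (\<Sum>\<theta>\<in>(achars :: ('a \<Rightarrow> complex) set). 1)"
    by (rule sum.cong) (simp_all add: achars_0)
  thus ?thesis by simp
qed

lemma card_achars: "card (achars :: ('a::{finite,field} \<Rightarrow> complex) set) = card (UNIV :: 'a set)"
proof -
  have "(\<Sum>t\<in>(UNIV::'a set). \<Sum>\<theta>\<in>achars. \<theta> t) = (\<Sum>\<theta>\<in>achars. \<Sum>t\<in>(UNIV::'a set). \<theta> t)"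
    by (subst sum.swap) (rule refl)
  also have "\<dots> = (\<Sum>\<theta>\<in>(achars :: ('a \<Rightarrow> complex) set). if \<theta> = (\<lambda>_. 1) then of_nat (card (UNIV :: 'a set)) else 0)"
    by (rule sum.cong) (auto simp: sum_over_t)
  also have "\<dots> = of_nat (card (UNIV :: 'a set))"
    by (subst sum.delta[OF finite_achars]) (simp add: one_achars)
  finally have A: "(\<Sum>t\<in>(UNIV::'a set). \<Sum>\<theta>\<in>achars. \<theta> t) = of_nat (card (UNIV :: 'a set))" .
  have "(\<Sum>t\<in>(UNIV::'a set). \<Sum>\<theta>\<in>achars. \<theta> t) = (\<Sum>t\<in>(UNIV::'a set). if t = 0 then of_nat (card (achars :: ('a \<Rightarrow> complex) set)) else 0)"
    by (rule sum.cong) (auto simp: sum_over_chars_nz sum_at0)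
  also have "\<dots> = of_nat (card (achars :: ('a \<Rightarrow> complex) set))" by simp
  finally show ?thesis using A by simp
qed

lemma sum_achars: "(\<Sum>\<theta>\<in>achars. \<theta> t) = reg (t::'a::{finite,field})"
proof (cases "t = 0")
  case True
  then show ?thesis by (simp add: reg_def card_achars sum_at0)
next
  case False
  then show ?thesis by (simp add: sum_over_chars_nz reg_def)
qed

lemma sum_achars_nontriv: "(\<Sum>\<theta>\<in>achars - {\<lambda>_. 1}. \<theta> t) = reg (t::'a::{finite,field}) - triv t"
  using sum_diff1[OF finite_achars, of "\<lambda>\<theta>. \<theta> t" "\<lambda>_. 1"] one_achars
  by (simp add: sum_achars triv_def)

definition Pos :: "nat \<Rightarrow> (nat \<times> nat) set" where
  "Pos n = {(i,j). 1 \<le> i \<and> i < j \<and> j \<le> n}"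

definition sgl :: "nat \<Rightarrow> nat \<Rightarrow> 'a::{finite,field} \<Rightarrow> 'a mat" where
  "sgl i j t = (\<lambda>a b. if a = i \<and> b = j then t else 0)"

definition Phi :: "nat \<Rightarrow> (nat \<times> nat \<Rightarrow> 'a::{finite,field} \<Rightarrow> complex) \<Rightarrow> 'a mat \<Rightarrow> complex" where
  "Phi n \<theta> x = (if x \<in> ut n then \<Prod>q\<in>Pos n. \<theta> q (x (fst q) (snd q)) else 0)"

definition Theta :: "nat \<Rightarrow> ('a::{finite,field} mat \<Rightarrow> complex) \<Rightarrow> nat \<times> nat \<Rightarrow> 'a \<Rightarrow> complex" where
  "Theta n \<psi> = (\<lambda>q\<in>Pos n. \<lambda>t. \<psi> (sgl (fst q) (snd q) t))"

definition restr :: "(nat \<times> nat) set \<Rightarrow> 'a::{finite,field} mat \<Rightarrow> 'a mat" where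
  "restr Q x = (\<lambda>i j. if (i,j) \<in> Q then x i j else 0)"

lemma finite_Pos: "finite (Pos n)"
  by (rule finite_subset[of _ "{1..n} \<times> {1..n}"]) (auto simp: Pos_def)

lemma ut_iff: "x \<in> ut n \<longleftrightarrow> (\<forall>i j. x i j \<noteq> 0 \<longrightarrow> (i,j) \<in> Pos n)"
  by (auto simp: ut_def Pos_def)

lemma zero_ut: "(\<lambda>i j. 0) \<in> ut n"
  by (simp add: ut_def)

lemma add_ut: "x \<in> ut n \<Longrightarrow> y \<in> ut n \<Longrightarrow> (\<lambda>i j. x i j + y i j) \<in> ut n"
  by (auto simp: ut_def) (metis add.right_neutral)+

lemma sgl_ut: "(i,j) \<in> Pos n \<Longrightarrow> sgl i j t \<in> ut n"
  by (auto simp: ut_iff sgl_def)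

lemma sgl_zero: "sgl i j 0 = (\<lambda>a b. 0)"
  by (simp add: sgl_def fun_eq_iff)

lemma sgl_add: "sgl i j (s + t) = (\<lambda>a b. sgl i j s a b + sgl i j t a b)"
  by (simp add: sgl_def fun_eq_iff)

lemma irr_zero: "\<psi> \<in> irr_chars n \<Longrightarrow> \<psi> (\<lambda>i j. 0) = 1"
  by (simp add: irr_chars_def)

lemma irr_add: "\<psi> \<in> irr_chars n \<Longrightarrow> x \<in> ut n \<Longrightarrow> y \<in> ut n \<Longrightarrow> \<psi> (\<lambda>i j. x i j + y i j) = \<psi> x * \<psi> y"
  by (simp add: irr_chars_def)

lemma irr_out: "\<psi> \<in> irr_chars n \<Longrightarrow> x \<notin> ut n \<Longrightarrow> \<psi> x = 0"
  by (simp add: irr_chars_def)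

lemma restr_ut: "Q \<subseteq> Pos n \<Longrightarrow> restr Q x \<in> ut n"
  by (auto simp: ut_iff restr_def)

lemma restr_decomp:
  assumes psi: "\<psi> \<in> irr_chars n" and "finite Q" "Q \<subseteq> Pos n"
  shows "\<psi> (restr Q x) = (\<Prod>q\<in>Q. \<psi> (sgl (fst q) (snd q) (x (fst q) (snd q))))"
  using assms(2,3)
proof (induction Q rule: finite_induct)
  case empty
  have "restr {} x = (\<lambda>i j. 0)" by (simp add: restr_def fun_eq_iff)
  then show ?case using irr_zero[OF psi] by simp
next
  case (insert q Q)
  have eq: "restr (insert q Q) x = (\<lambda>i j. restr Q x i j + sgl (fst q) (snd q) (x (fst q) (snd q)) i j)"
    using insert.hyps(2) by (auto simp: restr_def sgl_def fun_eq_iff)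
  have "restr Q x \<in> ut n" using insert.prems by (intro restr_ut) auto
  moreover have "sgl (fst q) (snd q) (x (fst q) (snd q)) \<in> ut n" using insert.prems by (intro sgl_ut) auto
  ultimately have "\<psi> (restr (insert q Q) x) = \<psi> (restr Q x) * \<psi> (sgl (fst q) (snd q) (x (fst q) (snd q)))"
    unfolding eq by (rule irr_add[OF psi])
  then show ?case using insert by (simp add: mult.commute)
qed

lemma decomp:
  assumes psi: "\<psi> \<in> irr_chars n" and x: "x \<in> ut n"
  shows "\<psi> x = (\<Prod>q\<in>Pos n. \<psi> (sgl (fst q) (snd q) (x (fst q) (snd q))))"
proof -
  have "restr (Pos n) x = x" using x by (auto simp: restr_def ut_iff fun_eq_iff)
  thus ?thesis using restr_decomp[OF psi finite_Pos order_refl, where x=x] by simp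
qed

lemma Theta_achars:
  assumes psi: "\<psi> \<in> irr_chars n" and q: "q \<in> Pos n"
  shows "Theta n \<psi> q \<in> achars"
proof -
  have "\<psi> (sgl (fst q) (snd q) 0) = 1" using irr_zero[OF psi] by (simp add: sgl_zero)
  moreover have "\<psi> (sgl (fst q) (snd q) (a + b)) = \<psi> (sgl (fst q) (snd q) a) * \<psi> (sgl (fst q) (snd q) b)" for a b
    unfolding sgl_add using q by (intro irr_add[OF psi] sgl_ut) auto
  ultimately show ?thesis using q by (simp add: Theta_def achars_def)
qed

lemma Theta_PiE: "\<psi> \<in> irr_chars n \<Longrightarrow> Theta n \<psi> \<in> Pi\<^sub>E (Pos n) (\<lambda>_. achars)"
  using Theta_achars by (auto simp: Theta_def PiE_iff)

lemma Phi_irr: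
  assumes th: "\<theta> \<in> Pi\<^sub>E (Pos n) (\<lambda>_. achars)"
  shows "Phi n \<theta> \<in> irr_chars n"
proof -
  have a: "\<theta> q \<in> achars" if "q \<in> Pos n" for q using th that by auto
  have "Phi n \<theta> (\<lambda>i j. 0) = 1" using zero_ut a by (simp add: Phi_def achars_def)
  moreover have "Phi n \<theta> (\<lambda>i j. x i j + y i j) = Phi n \<theta> x * Phi n \<theta> y" if "x \<in> ut n" "y \<in> ut n" for x y
  proof -
    have "(\<Prod>q\<in>Pos n. \<theta> q (x (fst q) (snd q) + y (fst q) (snd q))) =
          (\<Prod>q\<in>Pos n. \<theta> q (x (fst q) (snd q)) * \<theta> q (y (fst q) (snd q)))"
      using a by (intro prod.cong) (auto simp: achars_def)
    thus ?thesis using that add_ut[OF that] by (simp add: Phi_def prod.distrib)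
  qed
  moreover have "Phi n \<theta> x = 0" if "x \<notin> ut n" for x using that by (simp add: Phi_def)
  ultimately show ?thesis unfolding irr_chars_def by blast
qed

lemma Phi_sgl:
  assumes th: "\<theta> \<in> Pi\<^sub>E (Pos n) (\<lambda>_. achars)" and q: "q \<in> Pos n"
  shows "Phi n \<theta> (sgl (fst q) (snd q) t) = \<theta> q t"
proof -
  have a: "\<theta> r \<in> achars" if "r \<in> Pos n" for r using th that by auto
  have "(\<Prod>r\<in>Pos n. \<theta> r (sgl (fst q) (snd q) t (fst r) (snd r))) = (\<Prod>r\<in>Pos n. if r = q then \<theta> q t else 1)"
    using a by (intro prod.cong) (auto simp: sgl_def achars_def prod_eq_iff)
  also have "\<dots> = \<theta> q t" using q finite_Pos by (simp add: prod.delta')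
  moreover have "sgl (fst q) (snd q) t \<in> ut n" using q by (intro sgl_ut) simp
  ultimately show ?thesis by (simp add: Phi_def)
qed

lemma Theta_Phi:
  assumes th: "\<theta> \<in> Pi\<^sub>E (Pos n) (\<lambda>_. achars)"
  shows "Theta n (Phi n \<theta>) = \<theta>"
proof (rule ext)
  fix q show "Theta n (Phi n \<theta>) q = \<theta> q"
  proof (cases "q \<in> Pos n")
    case True
    then show ?thesis using Phi_sgl[OF th True] by (simp add: Theta_def fun_eq_iff)
  next
    case False
    have "\<theta> q = undefined" using th False by (rule PiE_arb)
    then show ?thesis using False by (simp add: Theta_def)
  qed
qed

lemma Phi_Theta:
  assumes psi: "\<psi> \<in> irr_chars n"
  shows "Phi n (Theta n \<psi>) = \<psi>"
proof (rule ext)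
  fix x show "Phi n (Theta n \<psi>) x = \<psi> x"
  proof (cases "x \<in> ut n")
    case True
    have "(\<Prod>q\<in>Pos n. Theta n \<psi> q (x (fst q) (snd q))) = (\<Prod>q\<in>Pos n. \<psi> (sgl (fst q) (snd q) (x (fst q) (snd q))))"
      by (intro prod.cong) (auto simp: Theta_def)
    then show ?thesis using True decomp[OF psi True] by (simp add: Phi_def)
  next
    case False
    then show ?thesis using irr_out[OF psi False] by (simp add: Phi_def)
  qed
qed

lemma sgl_utp:
  assumes "(i,j) \<in> Pos n" "j - i \<le> iota n w i"
  shows "sgl i j t \<in> ut_perm n w"
  using assms sgl_ut[OF assms(1)] by (auto simp: ut_perm_def sgl_def Pos_def)

lemma sgl_not_utp:
  assumes "iota n w i < j - i"
  shows "sgl i j (1::'a::{finite,field}) \<notin> ut_perm n w"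
  using assms by (auto simp: ut_perm_def sgl_def)

lemma ker_iff:
  fixes \<psi> :: "'a::{finite,field} mat \<Rightarrow> complex"
  assumes psi: "\<psi> \<in> irr_chars n"
  shows "ut_perm n w \<subseteq> ker_char n \<psi> \<longleftrightarrow>
    (\<forall>i j. (i,j) \<in> Pos n \<longrightarrow> j - i \<le> iota n w i \<longrightarrow> Theta n \<psi> (i,j) = (\<lambda>_. 1))"
proof
  assume sub: "ut_perm n w \<subseteq> ker_char n \<psi>"
  show "\<forall>i j. (i,j) \<in> Pos n \<longrightarrow> j - i \<le> iota n w i \<longrightarrow> Theta n \<psi> (i,j) = (\<lambda>_. 1)"
  proof (intro allI impI ext)
    fix i j t assume ij: "(i,j) \<in> Pos n" "j - i \<le> iota n w i"
    have "sgl i j t \<in> ker_char n \<psi>" using sgl_utp[OF ij] sub by blast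
    hence "\<psi> (sgl i j t) = 1" using irr_zero[OF psi] by (simp add: ker_char_def)
    thus "Theta n \<psi> (i,j) t = 1" using ij by (simp add: Theta_def)
  qed
next
  assume H: "\<forall>i j. (i,j) \<in> Pos n \<longrightarrow> j - i \<le> iota n w i \<longrightarrow> Theta n \<psi> (i,j) = (\<lambda>_. 1)"
  show "ut_perm n w \<subseteq> ker_char n \<psi>"
  proof
    fix x :: "'a mat" assume x: "x \<in> ut_perm n w"
    hence xu: "x \<in> ut n" by (simp add: ut_perm_def)
    have "\<psi> (sgl (fst q) (snd q) (x (fst q) (snd q))) = 1" if q: "q \<in> Pos n" for q
    proof (cases "x (fst q) (snd q) = 0")
      case True
      then show ?thesis using irr_zero[OF psi] by (simp add: sgl_zero)
    next
      case False
      hence "snd q - fst q \<le> iota n w (fst q)" using x by (auto simp: ut_perm_def)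
      hence "Theta n \<psi> (fst q, snd q) = (\<lambda>_. 1)" using H[rule_format, of "fst q" "snd q"] q by simp
      hence "(\<lambda>t. \<psi> (sgl (fst q) (snd q) t)) = (\<lambda>_. 1)" using q by (simp add: Theta_def)
      thus ?thesis by (metis (mono_tags, lifting))
    qed
    hence "\<psi> x = 1" using decomp[OF psi xu] by simp
    thus "x \<in> ker_char n \<psi>" using xu irr_zero[OF psi] by (simp add: ker_char_def)
  qed
qed

lemma cyc:
  assumes "1 \<le> i" "1 \<le> d" "i + d \<le> n"
  shows "\<exists>\<sigma>. \<sigma> permutes {1..n} \<and> iota n \<sigma> i = d \<and> (\<forall>k\<in>{1..n}. k \<noteq> i \<longrightarrow> iota n \<sigma> k = 0)"
proof -
  define \<sigma> where "\<sigma> k = (if i \<le> k \<and> k < i + d then k + 1 else if k = i + d then i else k)" for k :: nat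
  define \<tau> where "\<tau> k = (if i < k \<and> k \<le> i + d then k - 1 else if k = i then i + d else k)" for k :: nat
  have bij: "bij_betw \<sigma> {1..n} {1..n}"
    by (rule bij_betw_byWitness[where f'=\<tau>]) (use assms in \<open>auto simp: \<sigma>_def \<tau>_def\<close>)
  have perm: "\<sigma> permutes {1..n}"
    by (rule bij_imp_permutes[OF bij]) (use assms in \<open>auto simp: \<sigma>_def\<close>)
  have inv: "inv_into {1..n} \<sigma> k = \<tau> k" if "k \<in> {1..n}" for k
  proof (rule inv_into_f_eq)
    show "inj_on \<sigma> {1..n}" using bij by (simp add: bij_betw_def)
    show "\<tau> k \<in> {1..n}" using that assms by (auto simp: \<tau>_def)
    show "\<sigma> (\<tau> k) = k" using that assms by (auto simp: \<tau>_def \<sigma>_def)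
  qed
  have "{m \<in> {1..n}. m < inv_into {1..n} \<sigma> i \<and> \<sigma> m > i} = {i..<i+d}"
    using inv[of i] assms by (auto simp: \<tau>_def \<sigma>_def)
  hence "iota n \<sigma> i = d" by (simp add: iota_def)
  moreover have "iota n \<sigma> k = 0" if "k \<in> {1..n}" "k \<noteq> i" for k
  proof -
    have "{m \<in> {1..n}. m < inv_into {1..n} \<sigma> k \<and> \<sigma> m > k} = {}"
      using inv[OF that(1)] that assms by (auto simp: \<tau>_def \<sigma>_def split: if_splits)
    thus ?thesis by (simp add: iota_def)
  qed
  ultimately show ?thesis using perm by blast
qed

definition Cset :: "nat \<Rightarrow> (nat \<Rightarrow> nat) \<Rightarrow> nat \<times> nat \<Rightarrow> ('a::{finite,field} \<Rightarrow> complex) set" where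
  "Cset n v q = (if snd q - fst q \<le> iota n v (fst q) then {\<lambda>_. 1}
     else if snd q - fst q = iota n v (fst q) + 1 then achars - {\<lambda>_. 1} else achars)"

lemma Cset_sub: "Cset n v q \<subseteq> achars"
  using one_achars by (auto simp: Cset_def)

lemma charac:
  fixes \<psi> :: "'a::{finite,field} mat \<Rightarrow> complex"
  assumes psi: "\<psi> \<in> irr_chars n" and v: "v permutes {1..n}"
  shows "(\<exists>u. u permutes {1..n} \<and> largest_in_ker n \<psi> u \<and> (ut_perm n u :: 'a mat set) = ut_perm n v)
     \<longleftrightarrow> Theta n \<psi> \<in> Pi\<^sub>E (Pos n) (Cset n v)"
proof
  assume "\<exists>u. u permutes {1..n} \<and> largest_in_ker n \<psi> u \<and> (ut_perm n u :: 'a mat set) = ut_perm n v"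
  then obtain u where u: "u permutes {1..n}" "largest_in_ker n \<psi> u" "(ut_perm n u :: 'a mat set) = ut_perm n v"
    by blast
  have subv: "ut_perm n v \<subseteq> ker_char n \<psi>" using u by (simp add: largest_in_ker_def)
  have T1: "Theta n \<psi> (i,j) = (\<lambda>_. 1)" if "(i,j) \<in> Pos n" "j - i \<le> iota n v i" for i j
    using subv ker_iff[OF psi, of v] that by blast
  have "Theta n \<psi> q \<in> Cset n v q" if q: "q \<in> Pos n" for q
  proof -
    obtain i j where ij: "q = (i,j)" by (cases q)
    have P: "(i,j) \<in> Pos n" using q ij by simp
    have A: "Theta n \<psi> q \<in> achars" using Theta_achars[OF psi q] .
    show ?thesis
    proof (cases "j - i \<le> iota n v i")
      case True
      then show ?thesis using T1[OF P True] ij by (simp add: Cset_def)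
    next
      case False
      show ?thesis
      proof (cases "j - i = iota n v i + 1")
        case eq: True
        have "Theta n \<psi> (i,j) \<noteq> (\<lambda>_. 1)"
        proof
          assume T2: "Theta n \<psi> (i,j) = (\<lambda>_. 1)"
          have "1 \<le> i" "1 \<le> iota n v i + 1" "i + (iota n v i + 1) \<le> n" using P eq by (auto simp: Pos_def)
          then obtain \<sigma> where s: "\<sigma> permutes {1..n}" "iota n \<sigma> i = iota n v i + 1"
            "\<forall>k\<in>{1..n}. k \<noteq> i \<longrightarrow> iota n \<sigma> k = 0"
            using cyc by blast
          have "ut_perm n \<sigma> \<subseteq> ker_char n \<psi>"
            unfolding ker_iff[OF psi]
          proof (intro allI impI)
            fix a b assume ab: "(a,b) \<in> Pos n" "b - a \<le> iota n \<sigma> a"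
            have "a = i"
            proof (rule ccontr)
              assume "a \<noteq> i"
              hence "iota n \<sigma> a = 0" using s(3) ab(1) by (auto simp: Pos_def)
              thus False using ab by (auto simp: Pos_def)
            qed
            show "Theta n \<psi> (a,b) = (\<lambda>_. 1)"
            proof (cases "b - a \<le> iota n v a")
              case True then show ?thesis using T1 ab by blast
            next
              case False
              hence "b = j" using ab s(2) \<open>a = i\<close> eq P by (auto simp: Pos_def)
              then show ?thesis using T2 \<open>a = i\<close> by simp
            qed
          qed
          hence "ut_perm n \<sigma> \<subseteq> (ut_perm n u :: 'a mat set)" using u(2) s(1) by (simp add: largest_in_ker_def)
          moreover have "sgl i j (1::'a) \<in> ut_perm n \<sigma>" using P s(2) eq by (intro sgl_utp) auto
          moreover have "sgl i j (1::'a) \<notin> ut_perm n v" using eq by (intro sgl_not_utp) auto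
          ultimately show False using u(3) by blast
        qed
        then show ?thesis using A ij False eq by (simp add: Cset_def)
      next
        case neq: False
        then show ?thesis using A ij False by (simp add: Cset_def)
      qed
    qed
  qed
  thus "Theta n \<psi> \<in> Pi\<^sub>E (Pos n) (Cset n v)" by (auto simp: Theta_def PiE_iff)
next
  assume T: "Theta n \<psi> \<in> Pi\<^sub>E (Pos n) (Cset n v)"
  have TC: "Theta n \<psi> (i,j) \<in> Cset n v (i,j)" if "(i,j) \<in> Pos n" for i j using T that by blast
  have subv: "ut_perm n v \<subseteq> ker_char n \<psi>"
    unfolding ker_iff[OF psi]
  proof (intro allI impI)
    fix i j assume ij: "(i,j) \<in> Pos n" "j - i \<le> iota n v i"
    have "Theta n \<psi> (i,j) \<in> Cset n v (i,j)" using TC[OF ij(1)] .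
    thus "Theta n \<psi> (i,j) = (\<lambda>_. 1)" using ij(2) by (simp add: Cset_def)
  qed
  have "largest_in_ker n \<psi> v"
    unfolding largest_in_ker_def
  proof (intro conjI allI impI subv)
    fix u assume u: "u permutes {1..n}" and subu: "(ut_perm n u :: 'a mat set) \<subseteq> ker_char n \<psi>"
    show "(ut_perm n u :: 'a mat set) \<subseteq> ut_perm n v"
    proof
      fix y :: "'a mat" assume y: "y \<in> ut_perm n u"
      have "y \<in> ut n" using y by (simp add: ut_perm_def)
      moreover have "0 < b - a \<and> b - a \<le> iota n v a" if nz: "y a b \<noteq> 0" for a b
      proof -
        have ab: "0 < b - a" "b - a \<le> iota n u a" using y nz by (auto simp: ut_perm_def)
        have abP: "(a,b) \<in> Pos n" using \<open>y \<in> ut n\<close> nz by (auto simp: ut_iff)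
        show ?thesis
        proof (rule ccontr)
          assume "\<not> ?thesis"
          hence gt: "iota n v a < b - a" using ab by auto
          define j' where "j' = a + iota n v a + 1"
          have P': "(a, j') \<in> Pos n" using abP gt by (auto simp: Pos_def j'_def)
          have "j' - a \<le> iota n u a" using ab gt by (simp add: j'_def)
          hence "Theta n \<psi> (a,j') = (\<lambda>_. 1)" using subu ker_iff[OF psi, of u] P' by blast
          moreover have "Theta n \<psi> (a,j') \<in> achars - {\<lambda>_. 1}" using TC[OF P'] by (simp add: Cset_def j'_def)
          ultimately show False by simp
        qed
      qed
      ultimately show "y \<in> ut_perm n v" by (simp add: ut_perm_def)
    qed
  qed
  thus "\<exists>u. u permutes {1..n} \<and> largest_in_ker n \<psi> u \<and> (ut_perm n u :: 'a mat set) = ut_perm n v"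
    using v by blast
qed

theorem corollary3p3:
  fixes v :: "nat \<Rightarrow> nat" and n :: nat and x :: "('a::{finite,field}) mat"
  assumes "v permutes {1..n}" and "x \<in> ut n"
  shows "superchar n v x =
    (\<Prod>(i,j) \<in> {(i,j). 1 \<le> i \<and> i < j \<and> j \<le> n \<and> j - i \<le> iota n v i}. triv (x i j)) *
    (\<Prod>(i,j) \<in> {(i,j). 1 \<le> i \<and> i < j \<and> j \<le> n \<and> j - i = iota n v i + 1}. reg (x i j) - triv (x i j)) *
    (\<Prod>(i,j) \<in> {(i,j). 1 \<le> i \<and> i < j \<and> j \<le> n \<and> j - i > iota n v i + 1}. reg (x i j))"
proof -
  let ?S = "{\<psi> \<in> (irr_chars n :: ('a mat \<Rightarrow> complex) set). \<exists>u. u permutes {1..n} \<and> largest_in_ker n \<psi> u \<and>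
                 (ut_perm n u :: 'a mat set) = ut_perm n v}"
  let ?G = "\<lambda>q. if snd q - fst q \<le> iota n v (fst q) then triv (x (fst q) (snd q))
     else if snd q - fst q = iota n v (fst q) + 1 then reg (x (fst q) (snd q)) - triv (x (fst q) (snd q))
     else reg (x (fst q) (snd q))"
  let ?A = "{(i,j). 1 \<le> i \<and> i < j \<and> j \<le> n \<and> j - i \<le> iota n v i}"
  let ?B = "{(i,j). 1 \<le> i \<and> i < j \<and> j \<le> n \<and> j - i = iota n v i + 1}"
  let ?D = "{(i,j). 1 \<le> i \<and> i < j \<and> j \<le> n \<and> j - i > iota n v i + 1}"
  have "superchar n v x = (\<Sum>\<psi>\<in>?S. \<psi> (\<lambda>i j. 0) * \<psi> x)" by (simp add: superchar_def)
  also have "\<dots> = (\<Sum>\<theta>\<in>Pi\<^sub>E (Pos n) (Cset n v). \<Prod>q\<in>Pos n. \<theta> q (x (fst q) (snd q)))"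
  proof (rule sum.reindex_bij_witness[where i="Phi n" and j="Theta n"])
    fix \<psi> :: "'a mat \<Rightarrow> complex" assume "\<psi> \<in> ?S"
    hence psi: "\<psi> \<in> irr_chars n" and ex: "\<exists>u. u permutes {1..n} \<and> largest_in_ker n \<psi> u \<and>
                 (ut_perm n u :: 'a mat set) = ut_perm n v" by auto
    show "Phi n (Theta n \<psi>) = \<psi>" by (rule Phi_Theta[OF psi])
    show "Theta n \<psi> \<in> Pi\<^sub>E (Pos n) (Cset n v)" by (rule charac[OF psi assms(1), THEN iffD1, OF ex])
    have "(\<Prod>q\<in>Pos n. Theta n \<psi> q (x (fst q) (snd q))) = (\<Prod>q\<in>Pos n. \<psi> (sgl (fst q) (snd q) (x (fst q) (snd q))))"
      by (intro prod.cong) (auto simp: Theta_def)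
    also have "\<dots> = \<psi> x" using decomp[OF psi assms(2)] by simp
    finally show "(\<Prod>q\<in>Pos n. Theta n \<psi> q (x (fst q) (snd q))) = \<psi> (\<lambda>i j. 0) * \<psi> x"
      using irr_zero[OF psi] by simp
  next
    fix \<theta> :: "nat \<times> nat \<Rightarrow> 'a \<Rightarrow> complex" assume th: "\<theta> \<in> Pi\<^sub>E (Pos n) (Cset n v)"
    have th': "\<theta> \<in> Pi\<^sub>E (Pos n) (\<lambda>_. achars)" using th PiE_mono[of "Pos n" "Cset n v" "\<lambda>_. achars"] Cset_sub by blast
    show "Theta n (Phi n \<theta>) = \<theta>" by (rule Theta_Phi[OF th'])
    have irr: "Phi n \<theta> \<in> irr_chars n" by (rule Phi_irr[OF th'])
    moreover have "\<exists>u. u permutes {1..n} \<and> largest_in_ker n (Phi n \<theta>) u \<and>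
                 (ut_perm n u :: 'a mat set) = ut_perm n v"
      using charac[OF irr assms(1)] Theta_Phi[OF th'] th by simp
    ultimately show "Phi n \<theta> \<in> ?S" by blast
  qed
  also have "\<dots> = (\<Prod>q\<in>Pos n. \<Sum>\<theta>\<in>Cset n v q. \<theta> (x (fst q) (snd q)))"
    by (rule prod_sum_PiE[where f="\<lambda>q \<theta>. \<theta> (x (fst q) (snd q))", symmetric])
       (auto intro: finite_Pos finite_subset[OF Cset_sub finite_achars])
  also have "\<dots> = (\<Prod>q\<in>Pos n. ?G q)"
    by (rule prod.cong) (auto simp: Cset_def sum_achars sum_achars_nontriv triv_def)
  also have "\<dots> = (\<Prod>q\<in>?A. ?G q) * (\<Prod>q\<in>?B. ?G q) * (\<Prod>q\<in>?D. ?G q)"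
  proof -
    have split: "Pos n = (?A \<union> ?B) \<union> ?D" by (auto simp: Pos_def)
    have fin: "finite ?A" "finite ?B" "finite ?D"
      by (rule finite_subset[OF _ finite_Pos[of n]], auto simp: Pos_def)+
    have "(\<Prod>q\<in>Pos n. ?G q) = (\<Prod>q\<in>?A \<union> ?B. ?G q) * (\<Prod>q\<in>?D. ?G q)"
      unfolding split by (rule prod.union_disjoint) (use fin in auto)
    also have "(\<Prod>q\<in>?A \<union> ?B. ?G q) = (\<Prod>q\<in>?A. ?G q) * (\<Prod>q\<in>?B. ?G q)"
      by (rule prod.union_disjoint) (use fin in auto)
    finally show ?thesis .
  qed
  also have "(\<Prod>q\<in>?A. ?G q) = (\<Prod>(i,j)\<in>?A. triv (x i j))"
    by (rule prod.cong) auto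
  also have "(\<Prod>q\<in>?B. ?G q) = (\<Prod>(i,j)\<in>?B. reg (x i j) - triv (x i j))"
    by (rule prod.cong) auto
  also have "(\<Prod>q\<in>?D. ?G q) = (\<Prod>(i,j)\<in>?D. reg (x i j))"
    by (rule prod.cong) auto
  finally show ?thesis .
qed

end
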